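(* Let $m\ge 1$ and $n\geq 3m+1$ be integers, and let $p,q$ be real numbers with $0<p\leq q$ and $0<p+q<1$. Then the minimum discrepancy of $C_{n,m}$ satisfies $$\delta(C_{n,m})\leq\min\{m^2,\ (1+\gamma)m\},$$ where $\gamma=\gamma_{p,q}=\log_{\frac{q}{1-p}}\left(\frac{p}{1-q}\right)$.
   Context: For integers $n\geq 2$, $N=\binom{n}{2}$ and $1\leq m\leq n$, the community code $C_{n,m}\subseteq\mathbb{F}_2^N$ consists of exactly those binary vectors of length $N$ that are the upper-triangular (off-diagonal) part of the adjacency matrix of a simple undirected graph on the labeled vertex set $\{1,\ldots,n\}$ which is a disjoint union of cliques, each clique having at least $m$ vertices. For $\mathbf{x},\mathbf{y}\in\mathbb{F}_2^N$ and $a,b\in\mathbb{F}_2$ let $d_{ab}(\mathbf{y},\mathbf{x})=|\{i: y_i=a,\ x_i=b\}|$. The discrepancy is $\delta(\mathbf{y},\mathbf{x})=\gamma\, d_{10}(\mathbf{y},\mathbf{x})+d_{01}(\mathbf{y},\mathbf{x})$ with $\gamma=\log_{\frac{q}{1-p}}\left(\frac{p}{1-q}\right)$. The minimum discrepancy $\delta(C)$ of a code $C$ is the minimum of $\delta(\mathbf{y},\mathbf{x})$ over all ordered pairs of distinct codewords $\mathbf{x},\mathbf{y}\in C$. *)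

theory Defs
  imports "HOL-Analysis.Analysis" "HOL-Library.Disjoint_Sets"
begin

(* A binary vector of length N = n choose 2 is represented by its support: a set of
   index pairs (i,j) with 1 <= i < j <= n (the upper-triangular positions). *)

definition gamma_pq :: "real \<Rightarrow> real \<Rightarrow> real" where
  "gamma_pq p q = log (q / (1 - p)) (p / (1 - q))"

(* community code C_{n,m}: upper-triangular adjacency supports of graphs on {1..n}
   that are disjoint unions of cliques, each clique of size >= m *)
definition community_code :: "nat \<Rightarrow> nat \<Rightarrow> (nat \<times> nat) set set" where
  "community_code n m =
     { {(i, j). i < j \<and> (\<exists>B\<in>P. i \<in> B \<and> j \<in> B)} | P.
         partition_on {1..n} P \<and> (\<forall>B\<in>P. m \<le> card B) }"

(* d_{ab}(y,x) counts positions with y_i = a, x_i = b *)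
definition d10 :: "(nat \<times> nat) set \<Rightarrow> (nat \<times> nat) set \<Rightarrow> nat" where
  "d10 y x = card (y - x)"

definition d01 :: "(nat \<times> nat) set \<Rightarrow> (nat \<times> nat) set \<Rightarrow> nat" where
  "d01 y x = card (x - y)"

definition discrepancy :: "real \<Rightarrow> real \<Rightarrow> (nat \<times> nat) set \<Rightarrow> (nat \<times> nat) set \<Rightarrow> real" where
  "discrepancy p q y x = gamma_pq p q * real (d10 y x) + real (d01 y x)"

definition min_discrepancy :: "real \<Rightarrow> real \<Rightarrow> (nat \<times> nat) set set \<Rightarrow> real" where
  "min_discrepancy p q C = Min {discrepancy p q y x | x y. x \<in> C \<and> y \<in> C \<and> x \<noteq> y}"

end

theory Submission
  imports Defs
begin

definition cdw :: "nat set set \<Rightarrow> (nat \<times> nat) set" where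
  "cdw P = {(i, j). i < j \<and> (\<exists>B\<in>P. i \<in> B \<and> j \<in> B)}"

lemma disj3: "A \<inter> B = {} \<Longrightarrow> A \<inter> C = {} \<Longrightarrow> B \<inter> C = {} \<Longrightarrow> disjoint {A,B,C}"
  unfolding disjoint_def by auto
lemma disj2: "A \<inter> B = {} \<Longrightarrow> disjoint {A,B}"
  unfolding disjoint_def by auto
lemma part3:
  fixes a b n :: nat
  assumes "a \<ge> 1" "a < b" "b < n"
  shows "partition_on {1..n} {{1..a}, {a+1..b}, {b+1..n}}"
  unfolding partition_on_def using assms by (auto intro!: disj3)
lemma part2:
  fixes a n :: nat
  assumes "a \<ge> 1" "a < n"
  shows "partition_on {1..n} {{1..a}, {a+1..n}}"
  unfolding partition_on_def using assms by (auto intro!: disj2)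
lemma e1: fixes m n :: nat assumes "m \<ge> 1" "3*m+1 \<le> n" shows
 "cdw {{1..2*m}, {2*m+1..n}} - cdw {{1..m}, {m+1..2*m}, {2*m+1..n}} = {1..m} \<times> {m+1..2*m}"
    unfolding cdw_def using assms by auto
lemma e2: fixes m n :: nat assumes "m \<ge> 1" "3*m+1 \<le> n" shows
 "cdw {{1..m}, {m+1..2*m}, {2*m+1..n}} - cdw {{1..2*m}, {2*m+1..n}} = {}"
    unfolding cdw_def using assms by auto
lemma e3: fixes m n :: nat assumes "m \<ge> 1" "3*m+1 \<le> n" shows
 "cdw {{1..m+1}, {m+2..2*m+1}, {2*m+2..n}} - cdw {{1..m}, {m+1..2*m+1}, {2*m+2..n}} = {1..m} \<times> {m+1}"
    unfolding cdw_def using assms by auto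
lemma e4: fixes m n :: nat assumes "m \<ge> 1" "3*m+1 \<le> n" shows
 "cdw {{1..m}, {m+1..2*m+1}, {2*m+2..n}} - cdw {{1..m+1}, {m+2..2*m+1}, {2*m+2..n}} = {m+1} \<times> {m+2..2*m+1}"
    unfolding cdw_def using assms by auto
lemma in_code:
  assumes "partition_on {1..n} P" "\<forall>B\<in>P. m \<le> card B"
  shows "cdw P \<in> community_code n m"
  using assms unfolding community_code_def cdw_def by blast

lemma code_fin: "community_code n m \<subseteq> Pow ({1..n} \<times> {1..n})"
proof
  fix x assume "x \<in> community_code n m"
  then obtain P where P: "partition_on {1..n} P" and x: "x = {(i, j). i < j \<and> (\<exists>B\<in>P. i \<in> B \<and> j \<in> B)}"
    unfolding community_code_def by blast
  have "\<Union>P = {1..n}" using P by (simp add: partition_on_def)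
  hence "\<And>B. B \<in> P \<Longrightarrow> B \<subseteq> {1..n}" by blast
  thus "x \<in> Pow ({1..n} \<times> {1..n})" unfolding x by blast
qed
lemma min_le:
  assumes "x \<in> community_code n m" "y \<in> community_code n m" "x \<noteq> y"
  shows "min_discrepancy p q (community_code n m) \<le> discrepancy p q y x"
proof -
  have f: "finite (community_code n m)"
    by (rule finite_subset[OF code_fin]) auto
  let ?S = "{discrepancy p q y x | x y. x \<in> community_code n m \<and> y \<in> community_code n m \<and> x \<noteq> y}"
  have "?S \<subseteq> (\<lambda>(x,y). discrepancy p q y x) ` (community_code n m \<times> community_code n m)"
    by force
  hence "finite ?S"
    using f by (meson finite_SigmaI finite_imageI finite_subset)
  moreover have "discrepancy p q y x \<in> ?S" using assms by blast
  ultimately show ?thesis unfolding min_discrepancy_def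
    by (rule Min_le)
qed

theorem theorem3:
  fixes n m :: nat and p q :: real
  assumes "m \<ge> 1" and "n \<ge> 3 * m + 1"
    and "0 < p" and "p \<le> q" and "0 < p + q" and "p + q < 1"
  shows "min_discrepancy p q (community_code n m)
           \<le> min (real (m ^ 2)) ((1 + gamma_pq p q) * real m)"
proof -
  let ?C = "community_code n m"
  define P1 where "P1 = {{1..m}, {m+1..2*m}, {2*m+1..n}}"
  define P2 where "P2 = {{1..2*m}, {2*m+1..n}}"
  define Q1 where "Q1 = {{1..m}, {m+1..2*m+1}, {2*m+2..n}}"
  define Q2 where "Q2 = {{1..m+1}, {m+2..2*m+1}, {2*m+2..n}}"
  have pP1: "partition_on {1..n} P1" unfolding P1_def
    using part3[of m "2*m" n] assms by auto
  have pP2: "partition_on {1..n} P2" unfolding P2_def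
    using part2[of "2*m" n] assms by auto
  have pQ1: "partition_on {1..n} Q1" unfolding Q1_def
    using part3[of m "2*m+1" n] assms by auto
  have pQ2: "partition_on {1..n} Q2" unfolding Q2_def
    using part3[of "m+1" "2*m+1" n] assms by (auto simp: numeral_2_eq_2)
  have cP1: "\<forall>B\<in>P1. m \<le> card B" unfolding P1_def using assms by auto
  have cP2: "\<forall>B\<in>P2. m \<le> card B" unfolding P2_def using assms by auto
  have cQ1: "\<forall>B\<in>Q1. m \<le> card B" unfolding Q1_def using assms by auto
  have cQ2: "\<forall>B\<in>Q2. m \<le> card B" unfolding Q2_def using assms by auto
  have e1: "cdw P2 - cdw P1 = {1..m} \<times> {m+1..2*m}"
    unfolding P2_def P1_def by (rule e1[OF assms(1,2)])
  have e2: "cdw P1 - cdw P2 = {}"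
    unfolding P2_def P1_def by (rule e2[OF assms(1,2)])
  have e3: "cdw Q2 - cdw Q1 = {1..m} \<times> {m+1}"
    unfolding Q2_def Q1_def by (rule e3[OF assms(1,2)])
  have e4: "cdw Q1 - cdw Q2 = {m+1} \<times> {m+2..2*m+1}"
    unfolding Q2_def Q1_def by (rule e4[OF assms(1,2)])
  have d1: "discrepancy p q (cdw P1) (cdw P2) = real (m^2)"
    unfolding discrepancy_def d10_def d01_def e1 e2 by (simp add: power2_eq_square)
  have d2: "discrepancy p q (cdw Q2) (cdw Q1) = (1 + gamma_pq p q) * real m"
    unfolding discrepancy_def d10_def d01_def e3 e4 by (simp add: algebra_simps)
  have "(1, m+1) \<in> cdw P2 - cdw P1" unfolding e1 using assms by simp
  hence ne1: "cdw P2 \<noteq> cdw P1" by blast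
  have "(1, m+1) \<in> cdw Q2 - cdw Q1" unfolding e3 using assms by simp
  hence ne2: "cdw Q1 \<noteq> cdw Q2" by blast
  have "min_discrepancy p q ?C \<le> real (m^2)"
    using min_le[OF in_code[OF pP2 cP2] in_code[OF pP1 cP1] ne1, of p q] d1 by simp
  moreover have "min_discrepancy p q ?C \<le> (1 + gamma_pq p q) * real m"
    using min_le[OF in_code[OF pQ1 cQ1] in_code[OF pQ2 cQ2] ne2, of p q] d2 by simp
  ultimately show ?thesis by simp
qed

end
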